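(* For all integers $1\le l\le k$, the Fox function satisfies $\phi(2l,2k)=-\binom{k}{l}$.
   Context: For integers $0\le l\le k$, the Fox function is $\phi(l,k)=\sum_{\mathbf a}(-1)^{w(\mathbf a)+(l-1)}$, where the sum runs over all $l$-element subsets $\mathbf a\subseteq\{1,\dots,k\}$, $\mathbf b=\{1,\dots,k\}\setminus\mathbf a$, and $w(\mathbf a)$ is the number of pairs $(i,j)$ with $i\in\mathbf a$, $j\in\mathbf b$ and $j<i$. *)

theory Defs
  imports Main
begin

definition fox_w :: "nat \<Rightarrow> nat set \<Rightarrow> nat" where
  "fox_w k a = card {(i, j). i \<in> a \<and> j \<in> {1..k} - a \<and> j < i}"

text \<open>Fox function phi(l,k) = sum over l-subsets a of {1..k} of (-1)^(w(a)+(l-1)).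
  The sign (-1)^(l-1) is written as (-1)^(l+1), which agrees with it for all integers l
  (including l = 0).\<close>
definition fox_phi :: "nat \<Rightarrow> nat \<Rightarrow> int" where
  "fox_phi l k = (\<Sum>a\<in>{a. a \<subseteq> {1..k} \<and> card a = l}. (-1) ^ (fox_w k a + (l + 1)))"

end

theory Submission
  imports Defs
begin

definition S :: "nat \<Rightarrow> nat \<Rightarrow> nat set set" where
  "S l k = {a. a \<subseteq> {1..k} \<and> card a = l}"

definition g :: "nat \<Rightarrow> nat \<Rightarrow> int" where
  "g l k = (\<Sum>a\<in>S l k. (-1::int) ^ fox_w k a)"

definition G :: "nat \<Rightarrow> nat \<Rightarrow> int" where
  "G l k = (if odd l \<and> even k then 0 else int ((k div 2) choose (l div 2)))"

lemma finite_S: "finite (S l k)"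
  unfolding S_def by (rule finite_subset[of _ "Pow {1..k}"]) auto

lemma w_old:
  assumes "a \<subseteq> {1..k}"
  shows "fox_w (Suc k) a = fox_w k a"
proof -
  have "{(i, j). i \<in> a \<and> j \<in> {1..Suc k} - a \<and> j < i} = {(i, j). i \<in> a \<and> j \<in> {1..k} - a \<and> j < i}"
    using assms by auto
  thus ?thesis unfolding fox_w_def by simp
qed

lemma w_new:
  assumes "a \<subseteq> {1..k}" "card a = l"
  shows "fox_w (Suc k) (insert (Suc k) a) = fox_w k a + (k - l)"
proof -
  let ?A = "{(i, j). i \<in> a \<and> j \<in> {1..k} - a \<and> j < i}"
  have fa: "finite a" using assms(1) finite_subset by blast
  have "{(i, j). i \<in> insert (Suc k) a \<and> j \<in> {1..Suc k} - insert (Suc k) a \<and> j < i}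
        = ?A \<union> ({Suc k} \<times> ({1..k} - a))"
    using assms(1) by auto
  moreover have "finite ?A"
    by (rule finite_subset[of _ "a \<times> {1..k}"]) (auto simp: fa)
  moreover have "?A \<inter> ({Suc k} \<times> ({1..k} - a)) = {}" using assms(1) by auto
  moreover have "card ({Suc k} \<times> ({1..k} - a)) = k - l"
    using assms card_Diff_subset[OF fa assms(1)] by (simp add: card_cartesian_product)
  ultimately show ?thesis unfolding fox_w_def
    by (simp add: card_Un_disjoint)
qed

lemma g_0: "g 0 k = 1"
proof -
  have "S 0 k = {{}}" unfolding S_def
  proof (auto)
    fix x y assume "x \<subseteq> {Suc 0..k}" "card x = 0" "y \<in> x"
    moreover have "finite x" using calculation(1) finite_subset by blast
    ultimately show False by simp
  qed
  moreover have "fox_w k {} = 0" unfolding fox_w_def by simp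
  ultimately show ?thesis unfolding g_def by simp
qed

lemma g_k0: "g (Suc l) 0 = 0"
proof -
  have "S (Suc l) 0 = {}" unfolding S_def by auto
  thus ?thesis unfolding g_def by simp
qed

lemma S_split:
  "S (Suc l) (Suc k) = S (Suc l) k \<union> insert (Suc k) ` S l k"
proof
  show "S (Suc l) (Suc k) \<subseteq> S (Suc l) k \<union> insert (Suc k) ` S l k"
  proof
    fix a assume a: "a \<in> S (Suc l) (Suc k)"
    hence sub: "a \<subseteq> {1..Suc k}" and c: "card a = Suc l" unfolding S_def by auto
    have fa: "finite a" using sub finite_subset by blast
    show "a \<in> S (Suc l) k \<union> insert (Suc k) ` S l k"
    proof (cases "Suc k \<in> a")
      case True
      have "a - {Suc k} \<in> S l k" unfolding S_def using sub c True fa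
        by (auto simp: card_Diff_singleton)
      moreover have "a = insert (Suc k) (a - {Suc k})" using True by auto
      ultimately show ?thesis by blast
    next
      case False
      hence "a \<subseteq> {1..k}" using sub by (auto simp: le_Suc_eq)
      thus ?thesis using c unfolding S_def by auto
    qed
  qed
next
  show "S (Suc l) k \<union> insert (Suc k) ` S l k \<subseteq> S (Suc l) (Suc k)"
  proof
    fix a assume "a \<in> S (Suc l) k \<union> insert (Suc k) ` S l k"
    thus "a \<in> S (Suc l) (Suc k)"
    proof
      assume "a \<in> S (Suc l) k" thus ?thesis unfolding S_def by auto
    next
      assume "a \<in> insert (Suc k) ` S l k"
      then obtain b where b: "b \<subseteq> {1..k}" "card b = l" "a = insert (Suc k) b"
        unfolding S_def by auto
      have "finite b" using b(1) finite_subset by blast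
      moreover have "Suc k \<notin> b" using b(1) by auto
      ultimately show ?thesis using b unfolding S_def by auto
    qed
  qed
qed

lemma g_rec: "g (Suc l) (Suc k) = g (Suc l) k + (-1) ^ (k - l) * g l k"
proof -
  have disj: "S (Suc l) k \<inter> insert (Suc k) ` S l k = {}" unfolding S_def by auto
  have inj: "inj_on (insert (Suc k)) (S l k)"
    unfolding S_def inj_on_def
  proof (intro ballI impI)
    fix x y assume "x \<in> {a. a \<subseteq> {1..k} \<and> card a = l}" "y \<in> {a. a \<subseteq> {1..k} \<and> card a = l}"
      "insert (Suc k) x = insert (Suc k) y"
    moreover have "Suc k \<notin> x" "Suc k \<notin> y" using calculation by auto
    ultimately show "x = y" by (metis Diff_insert_absorb)
  qed
  have "g (Suc l) (Suc k) = (\<Sum>a\<in>S (Suc l) k. (-1::int) ^ fox_w (Suc k) a)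
       + (\<Sum>a\<in>insert (Suc k) ` S l k. (-1::int) ^ fox_w (Suc k) a)"
    unfolding g_def S_split by (rule sum.union_disjoint) (auto simp: finite_S disj)
  also have "(\<Sum>a\<in>S (Suc l) k. (-1::int) ^ fox_w (Suc k) a) = g (Suc l) k"
    unfolding g_def by (rule sum.cong) (auto simp: S_def w_old)
  also have "(\<Sum>a\<in>insert (Suc k) ` S l k. (-1::int) ^ fox_w (Suc k) a)
      = (\<Sum>a\<in>S l k. (-1::int) ^ fox_w (Suc k) (insert (Suc k) a))"
    by (rule sum.reindex[OF inj, unfolded comp_def])
  also have "\<dots> = (\<Sum>a\<in>S l k. (-1) ^ (k - l) * (-1::int) ^ fox_w k a)"
    by (rule sum.cong) (auto simp: S_def w_new power_add)
  also have "\<dots> = (-1) ^ (k - l) * g l k" unfolding g_def by (simp add: sum_distrib_left)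
  finally show ?thesis .
qed

lemma G_big: "k < m \<Longrightarrow> G m k = 0"
  unfolding G_def by auto presburger

lemma G_rec: "G (Suc m) (Suc k) = G (Suc m) k + (-1) ^ (k - m) * G m k"
proof (cases "k < m")
  case True
  thus ?thesis using G_big[of k m] G_big[of "Suc k" "Suc m"] G_big[of k "Suc m"] by simp
next
  case False
  hence mk: "m \<le> k" by simp
  obtain p where kp: "k = 2*p \<or> k = 2*p+1" by (metis oddE evenE)
  obtain q where mq: "m = 2*q \<or> m = 2*q+1" by (metis oddE evenE)
  from kp mq mk show ?thesis
  proof (elim disjE)
    assume "k = 2*p" "m = 2*q"
    moreover have "even (k - m)" using calculation mk by simp
    ultimately show ?thesis unfolding G_def by simp
  next
    assume h: "k = 2*p" "m = 2*q+1"
    hence "odd (k - m)" using mk by presburger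
    with h show ?thesis unfolding G_def by simp
  next
    assume h: "k = 2*p+1" "m = 2*q"
    hence "odd (k - m)" using mk by presburger
    with h show ?thesis unfolding G_def by simp
  next
    assume h: "k = 2*p+1" "m = 2*q+1"
    hence "even (k - m)" using mk by presburger
    with h show ?thesis unfolding G_def by simp
  qed
qed

lemma g_G: "g l k = G l k"
proof (induction k arbitrary: l)
  case 0
  show ?case
  proof (cases l)
    case 0 thus ?thesis by (simp add: g_0 G_def)
  next
    case (Suc m) thus ?thesis by (simp add: g_k0 G_def)
  qed
next
  case (Suc k)
  show ?case
  proof (cases l)
    case 0 thus ?thesis by (simp add: g_0 G_def)
  next
    case (Suc m) thus ?thesis using Suc.IH by (simp add: g_rec G_rec)
  qed
qed

theorem proposition2p5:
  fixes l k :: nat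
  assumes "1 \<le> l" and "l \<le> k"
  shows "fox_phi (2 * l) (2 * k) = - int (k choose l)"
proof -
  have "fox_phi (2 * l) (2 * k) = (\<Sum>a\<in>S (2*l) (2*k). - ((-1::int) ^ fox_w (2*k) a))"
    unfolding fox_phi_def S_def by (rule sum.cong) (auto simp: power_add)
  also have "\<dots> = - g (2*l) (2*k)" unfolding g_def by (simp add: sum_negf)
  also have "\<dots> = - int (k choose l)" by (simp add: g_G G_def)
  finally show ?thesis .
qed

end
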